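(* Let $\Omega\subset\mathbb{R}^2$ be a bounded domain, $T>0$, $a,b,m>0$ with $b>a$, and let $(v,u)$ be a sufficiently regular solution of $\Delta v=u_{x_1}$ and $u_t-\operatorname{div}(D\nabla u)=-\nabla u\cdot\mathbf{q}$ in $\Omega_T=\Omega\times(0,T)$, $D\nabla u\cdot\nu=0$ and $v=0$ on $\partial\Omega\times(0,T)$, $u(x,0)=u_0(x)$ on $\Omega$. Assume $u_0\in L^2(\Omega)$. Then $$\frac12\sup_{0\le t\le T}\int_\Omega u^2\,dx+\int_0^T\!\!\int_\Omega D\nabla u\cdot\nabla u\,dx\,dt\le\int_\Omega u_0^2\,dx.$$
   Context: $\nu$ is the unit outward normal, $\mathbf{q}=(-v_{x_2},v_{x_1})^T$, $D=(a|\mathbf{q}|+m)I+(b-a)\frac{\mathbf{q}\mathbf{q}^T}{|\mathbf{q}|}$ with $\frac{\mathbf{q}\mathbf{q}^T}{|\mathbf{q}|}=0$ when $\mathbf{q}=0$. "Sufficiently regular" means regular enough that the relevant integrations by parts are legitimate. *)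

theory Defs
  imports "HOL-Analysis.Analysis"
begin

text \<open>q = (-v_{x2}, v_{x1}) computed from the spatial gradient g of v.\<close>
definition qvec :: "real^2 \<Rightarrow> real^2" where
  "qvec g = (\<chi> i. if i = 1 then - (g $ 2) else g $ 1)"

definition Dmat :: "real \<Rightarrow> real \<Rightarrow> real \<Rightarrow> real^2 \<Rightarrow> real^2^2" where
  "Dmat a b m q = (a * norm q + m) *\<^sub>R mat 1
     + (if q = 0 then 0 else ((b - a) / norm q) *\<^sub>R (\<chi> i j. q $ i * q $ j))"

definition C1_field :: "(real^2) set \<Rightarrow> (real^2 \<Rightarrow> real^2) \<Rightarrow> (real^2 \<Rightarrow> real^2^2) \<Rightarrow> bool" where
  "C1_field U F J \<longleftrightarrow> (\<forall>x\<in>U. (F has_derivative (\<lambda>h. J x *v h)) (at x)) \<and> continuous_on U J"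

text \<open>Regularity of the domain: nu is a unit (outward) normal on the boundary and sigma
  a finite boundary measure such that the divergence (Gauss-Green) theorem holds for
  every C^1 vector field defined on a neighbourhood of the closure.\<close>
definition divergence_domain :: "(real^2) set \<Rightarrow> (real^2 \<Rightarrow> real^2) \<Rightarrow> (real^2) measure \<Rightarrow> bool" where
  "divergence_domain \<Omega> \<nu> \<sigma> \<longleftrightarrow>
     space \<sigma> = frontier \<Omega> \<and> sets \<sigma> = sets (restrict_space lborel (frontier \<Omega>)) \<and>
     finite_measure \<sigma> \<and> \<nu> \<in> borel_measurable \<sigma> \<and> (\<forall>x\<in>frontier \<Omega>. norm (\<nu> x) = 1) \<and>
     (\<forall>U F J. open U \<and> closure \<Omega> \<subseteq> U \<and> C1_field U F J \<longrightarrow>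
        integral \<Omega> (\<lambda>x. trace (J x)) = (\<integral>x. F x \<bullet> \<nu> x \<partial>\<sigma>))"

end

theory Submission
  imports Defs
begin


lemma int_closure:
  fixes f :: "'a::euclidean_space \<Rightarrow> real"
  assumes S: "bounded S" "open S" and f: "continuous_on (closure S) f"
  shows "f integrable_on S"
proof -
  have lm: "S \<in> lmeasurable" using S by (simp add: lmeasurable_open)
  have "compact (closure S)" using S by (simp add: compact_closure)
  then have "bounded (f ` closure S)" using f by (simp add: compact_continuous_image compact_imp_bounded)
  then obtain M where M: "\<And>x. x \<in> closure S \<Longrightarrow> norm (f x) \<le> M"
    by (auto simp: bounded_iff)
  show ?thesis
  proof (rule measurable_bounded_by_integrable_imp_integrable[where g="\<lambda>_. M"])
    show "f \<in> borel_measurable (lebesgue_on S)"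
      by (rule continuous_imp_measurable_on_sets_lebesgue)
         (use continuous_on_subset[OF f closure_subset] lm in auto)
    show "(\<lambda>_. M) integrable_on S" using lm by (rule integrable_on_const)
    show "\<And>x. x \<in> S \<Longrightarrow> norm (f x) \<le> M" using M closure_subset by blast
    show "S \<in> sets lebesgue" using lm by auto
  qed
qed




lemma line_deriv:
  fixes f :: "'a::real_inner \<Rightarrow> real"
  assumes "(f has_derivative (\<lambda>h. g \<bullet> h)) (at (c + s *\<^sub>R d))"
  shows "((\<lambda>s. f (c + s *\<^sub>R d)) has_real_derivative (g \<bullet> d)) (at s)"
proof -
  have "((\<lambda>s. c + s *\<^sub>R d) has_derivative (\<lambda>t. t *\<^sub>R d)) (at s)"
    by (auto intro!: derivative_eq_intros)
  from has_derivative_compose[OF this assms]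
  have "((\<lambda>s. f (c + s *\<^sub>R d)) has_derivative (\<lambda>t. g \<bullet> (t *\<^sub>R d))) (at s)" .
  moreover have "(\<lambda>t. g \<bullet> (t *\<^sub>R d)) = (*) (g \<bullet> d)" by (auto simp: mult.commute)
  ultimately show ?thesis by (simp add: has_field_derivative_def)
qed

lemma mixed_diff:
  fixes f :: "real^2 \<Rightarrow> real" and g :: "real^2 \<Rightarrow> real^2" and H :: "real^2 \<Rightarrow> real^2^2"
  assumes df: "\<forall>y\<in>cball x (2*h). (f has_derivative (\<lambda>k. g y \<bullet> k)) (at y)"
    and dg: "\<forall>y\<in>cball x (2*h). (g has_derivative (\<lambda>k. H y *v k)) (at y)"
    and h: "h > 0"
  shows "\<exists>p\<in>cball x (2*h). f (x + h *\<^sub>R axis i 1 + h *\<^sub>R axis j 1) - f (x + h *\<^sub>R axis i 1)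
            - f (x + h *\<^sub>R axis j 1) + f x = h * h * H p $ i $ j"
proof -
  define ei where "ei = (axis i 1 :: real^2)"
  define ej where "ej = (axis j 1 :: real^2)"
  have nei: "norm ei = 1" "norm ej = 1" by (auto simp: ei_def ej_def)
  have inb: "x + s *\<^sub>R ei + r *\<^sub>R ej \<in> cball x (2*h)" if "0 \<le> s" "s \<le> h" "0 \<le> r" "r \<le> h" for s r
  proof -
    have "norm (s *\<^sub>R ei + r *\<^sub>R ej) \<le> norm (s *\<^sub>R ei) + norm (r *\<^sub>R ej)" by (rule norm_triangle_ineq)
    also have "\<dots> \<le> 2 * h" using that nei by simp
    finally have "norm (s *\<^sub>R ei + r *\<^sub>R ej) \<le> 2 * h" .
    moreover have "dist x (x + s *\<^sub>R ei + r *\<^sub>R ej) = norm (s *\<^sub>R ei + r *\<^sub>R ej)"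
      by (simp add: dist_norm add.assoc norm_minus_commute add.commute)
    ultimately show ?thesis by simp
  qed
  define \<phi> where "\<phi> s = f (x + h *\<^sub>R ej + s *\<^sub>R ei) - f (x + s *\<^sub>R ei)" for s
  have d\<phi>: "(\<phi> has_real_derivative (g (x + h *\<^sub>R ej + s *\<^sub>R ei) $ i - g (x + s *\<^sub>R ei) $ i)) (at s)"
    if "0 \<le> s" "s \<le> h" for s
  proof -
    have a1: "x + h *\<^sub>R ej + s *\<^sub>R ei \<in> cball x (2*h)"
      using inb[of s h] that h by (simp add: algebra_simps)
    have a2: "x + s *\<^sub>R ei \<in> cball x (2*h)"
      using inb[of s 0] that h by (simp add: algebra_simps)
    have "g (x + h *\<^sub>R ej + s *\<^sub>R ei) \<bullet> ei = g (x + h *\<^sub>R ej + s *\<^sub>R ei) $ i"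
         "g (x + s *\<^sub>R ei) \<bullet> ei = g (x + s *\<^sub>R ei) $ i"
      by (auto simp: ei_def inner_axis)
    with line_deriv[of f "g (x + h *\<^sub>R ej + s *\<^sub>R ei)" "x + h *\<^sub>R ej" s ei]
         line_deriv[of f "g (x + s *\<^sub>R ei)" x s ei] a1 a2 df
    show ?thesis unfolding \<phi>_def by (auto intro!: derivative_eq_intros)
  qed
  obtain \<sigma> where \<sigma>: "0 < \<sigma>" "\<sigma> < h"
    "\<phi> h - \<phi> 0 = (h - 0) * (g (x + h *\<^sub>R ej + \<sigma> *\<^sub>R ei) $ i - g (x + \<sigma> *\<^sub>R ei) $ i)"
    using MVT2[OF h d\<phi>] by blast
  define \<psi> where "\<psi> r = g (x + \<sigma> *\<^sub>R ei + r *\<^sub>R ej) $ i" for r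
  have d\<psi>: "(\<psi> has_real_derivative (H (x + \<sigma> *\<^sub>R ei + r *\<^sub>R ej) $ i $ j)) (at r)"
    if "0 \<le> r" "r \<le> h" for r
  proof -
    have a1: "x + \<sigma> *\<^sub>R ei + r *\<^sub>R ej \<in> cball x (2*h)" using inb[of \<sigma> r] that \<sigma> by simp
    have "((\<lambda>y. g y $ i) has_derivative (\<lambda>k. (H (x + \<sigma> *\<^sub>R ei + r *\<^sub>R ej) *v k) $ i))
        (at (x + \<sigma> *\<^sub>R ei + r *\<^sub>R ej))"
      using bounded_linear.has_derivative[OF bounded_linear_vec_nth, of g] dg a1 by blast
    then have "((\<lambda>y. g y $ i) has_derivative (\<lambda>k. (H (x + \<sigma> *\<^sub>R ei + r *\<^sub>R ej) $ i) \<bullet> k))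
        (at (x + \<sigma> *\<^sub>R ei + r *\<^sub>R ej))"
      by (simp add: matrix_vector_mul_component)
    from line_deriv[OF this] show ?thesis
      unfolding \<psi>_def by (simp add: ej_def inner_axis)
  qed
  obtain \<rho> where \<rho>: "0 < \<rho>" "\<rho> < h"
    "\<psi> h - \<psi> 0 = (h - 0) * H (x + \<sigma> *\<^sub>R ei + \<rho> *\<^sub>R ej) $ i $ j"
    using MVT2[OF h d\<psi>] by blast
  have "f (x + h *\<^sub>R axis i 1 + h *\<^sub>R axis j 1) - f (x + h *\<^sub>R axis i 1)
            - f (x + h *\<^sub>R axis j 1) + f x = \<phi> h - \<phi> 0"
    by (simp add: \<phi>_def ei_def ej_def algebra_simps)
  also have "\<dots> = h * (\<psi> h - \<psi> 0)" using \<sigma>(3) by (simp add: \<psi>_def algebra_simps)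
  also have "\<dots> = h * h * H (x + \<sigma> *\<^sub>R ei + \<rho> *\<^sub>R ej) $ i $ j" using \<rho>(3) by simp
  finally have "f (x + h *\<^sub>R axis i 1 + h *\<^sub>R axis j 1) - f (x + h *\<^sub>R axis i 1)
            - f (x + h *\<^sub>R axis j 1) + f x = h * h * H (x + \<sigma> *\<^sub>R ei + \<rho> *\<^sub>R ej) $ i $ j" .
  moreover have "x + \<sigma> *\<^sub>R ei + \<rho> *\<^sub>R ej \<in> cball x (2*h)" using inb[of \<sigma> \<rho>] \<sigma> \<rho> by simp
  ultimately show ?thesis by blast
qed


lemma abs_mat_le: "\<bar>(A::real^2^2) $ i $ j\<bar> \<le> norm A"
proof -
  have "\<bar>A $ i $ j\<bar> \<le> norm (A $ i)" by (rule component_le_norm_cart)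
  also have "\<dots> \<le> norm A" by (rule Finite_Cartesian_Product.norm_nth_le)
  finally show ?thesis .
qed

lemma schwarz:
  fixes f :: "real^2 \<Rightarrow> real" and g :: "real^2 \<Rightarrow> real^2" and H :: "real^2 \<Rightarrow> real^2^2"
  assumes U: "open U" "x \<in> U"
    and df: "\<forall>y\<in>U. (f has_derivative (\<lambda>k. g y \<bullet> k)) (at y)"
    and dg: "\<forall>y\<in>U. (g has_derivative (\<lambda>k. H y *v k)) (at y)"
    and cH: "continuous_on U H"
  shows "H x $ 1 $ 2 = H x $ 2 $ 1"
proof (rule ccontr)
  assume ne: "H x $ 1 $ 2 \<noteq> H x $ 2 $ 1"
  define d where "d = \<bar>H x $ 1 $ 2 - H x $ 2 $ 1\<bar>"
  have d: "d > 0" using ne by (simp add: d_def)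
  have "continuous (at x) H" using cH U by (simp add: continuous_on_eq_continuous_at)
  then obtain \<delta> where \<delta>: "\<delta> > 0" "\<And>y. dist y x < \<delta> \<Longrightarrow> dist (H y) (H x) < d/2"
    using d unfolding continuous_at_eps_delta by (metis half_gt_zero)
  obtain r where r: "r > 0" "ball x r \<subseteq> U" using U open_contains_ball by blast
  define h where "h = min \<delta> r / 4"
  have h: "h > 0" using \<delta> r by (simp add: h_def)
  have sub: "cball x (2*h) \<subseteq> ball x (min \<delta> r)" using h by (auto simp: h_def)
  moreover have "ball x (min \<delta> r) \<subseteq> ball x r" by (simp add: subset_ball)
  ultimately have subU: "cball x (2*h) \<subseteq> U" using r by blast
  obtain p where p: "p \<in> cball x (2*h)" and
    e1: "f (x + h *\<^sub>R axis 1 1 + h *\<^sub>R axis 2 1) - f (x + h *\<^sub>R axis 1 1)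
            - f (x + h *\<^sub>R axis 2 1) + f x = h * h * H p $ 1 $ 2"
    using mixed_diff[of x h f g H 1 2] df dg subU h by blast
  obtain p' where p': "p' \<in> cball x (2*h)" and
    e2: "f (x + h *\<^sub>R axis 2 1 + h *\<^sub>R axis 1 1) - f (x + h *\<^sub>R axis 2 1)
            - f (x + h *\<^sub>R axis 1 1) + f x = h * h * H p' $ 2 $ 1"
    using mixed_diff[of x h f g H 2 1] df dg subU h by blast
  have "h * h * H p $ 1 $ 2 = h * h * H p' $ 2 $ 1"
    using e1 e2 by (simp add: algebra_simps)
  then have eq: "H p $ 1 $ 2 = H p' $ 2 $ 1" using h by simp
  have "2*h < \<delta>" using \<delta> r by (auto simp: h_def min_def)
  then have "dist p x < \<delta>" "dist p' x < \<delta>" using p p' by (auto simp: dist_commute)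
  then have "norm (H p - H x) < d/2" "norm (H p' - H x) < d/2" using \<delta> by (auto simp: dist_norm)
  moreover have "\<bar>H p $ 1 $ 2 - H x $ 1 $ 2\<bar> \<le> norm (H p - H x)"
    using abs_mat_le[of "H p - H x" 1 2] by simp
  moreover have "\<bar>H p' $ 2 $ 1 - H x $ 2 $ 1\<bar> \<le> norm (H p' - H x)"
    using abs_mat_le[of "H p' - H x" 2 1] by simp
  ultimately have A: "\<bar>H p $ 1 $ 2 - H x $ 1 $ 2\<bar> < d/2" "\<bar>H p' $ 2 $ 1 - H x $ 2 $ 1\<bar> < d/2"
    by linarith+
  have aux: "\<And>a x y :: real. \<bar>a - x\<bar> < \<bar>x - y\<bar>/2 \<Longrightarrow> \<bar>a - y\<bar> < \<bar>x - y\<bar>/2 \<Longrightarrow> False"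
    by (auto simp: abs_if split: if_split_asm)
  show False using aux[OF A(1)[unfolded d_def] A(2)[unfolded d_def eq[symmetric]]] .
qed




lemma integral_const_lm:
  assumes "S \<in> lmeasurable"
  shows "integral S (\<lambda>t::'a::euclidean_space. c::real) = c * measure lebesgue S"
proof -
  have "integral S (\<lambda>t. c) = integral S (\<lambda>t. c * 1)" by simp
  also have "\<dots> = c * integral S (\<lambda>t. 1)" by (rule integral_mult_right)
  also have "\<dots> = c * measure lebesgue S" using lmeasure_integral[OF assms] by simp
  finally show ?thesis .
qed

lemma mvt_lin_bound:
  fixes \<phi> :: "real \<Rightarrow> real"
  assumes d: "\<And>s. s \<in> closed_segment x0 y \<Longrightarrow> (\<phi> has_real_derivative \<phi>' s) (at s)"
    and b: "\<And>s. s \<in> closed_segment x0 y \<Longrightarrow> \<bar>\<phi>' s\<bar> \<le> e"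
  shows "\<bar>\<phi> y - \<phi> x0\<bar> \<le> e * \<bar>y - x0\<bar>"
proof (cases "x0 = y")
  case True then show ?thesis using b[of x0] by simp
next
  case False
  show ?thesis
  proof (cases "x0 < y")
    case True
    have "\<And>s. x0 \<le> s \<Longrightarrow> s \<le> y \<Longrightarrow> (\<phi> has_real_derivative \<phi>' s) (at s)"
      using d True by (simp add: closed_segment_eq_real_ivl)
    from MVT2[OF True this] obtain z where z: "x0 < z" "z < y" "\<phi> y - \<phi> x0 = (y - x0) * \<phi>' z" by blast
    have "\<bar>\<phi>' z\<bar> \<le> e" using b z True by (simp add: closed_segment_eq_real_ivl)
    then show ?thesis using z True by (simp add: abs_mult mult.commute mult_left_mono)
  next
    case f2: False
    then have lt: "y < x0" using False by simp
    have "\<And>s. y \<le> s \<Longrightarrow> s \<le> x0 \<Longrightarrow> (\<phi> has_real_derivative \<phi>' s) (at s)"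
      using d lt by (simp add: closed_segment_eq_real_ivl)
    from MVT2[OF lt this] obtain z where z: "y < z" "z < x0" "\<phi> x0 - \<phi> y = (x0 - y) * \<phi>' z" by blast
    have "\<bar>\<phi>' z\<bar> \<le> e" using b z lt by (simp add: closed_segment_eq_real_ivl)
    then have "\<bar>\<phi> x0 - \<phi> y\<bar> \<le> e * \<bar>x0 - y\<bar>" using z lt by (simp add: abs_mult mult.commute mult_left_mono)
    then show ?thesis by (simp add: abs_minus_commute)
  qed
qed

lemma leibniz_set:
  fixes f fx :: "real \<Rightarrow> 'b::euclidean_space \<Rightarrow> real"
  assumes K: "compact K" "S \<subseteq> K" "S \<in> lmeasurable"
    and X: "open X" "x0 \<in> X"
    and fx: "\<And>x t. x \<in> X \<Longrightarrow> t \<in> K \<Longrightarrow> ((\<lambda>x. f x t) has_real_derivative fx x t) (at x)"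
    and cont: "continuous_on (X \<times> K) (\<lambda>(x, t). fx x t)"
    and intf: "\<And>x. x \<in> X \<Longrightarrow> f x integrable_on S"
    and intfx: "fx x0 integrable_on S"
  shows "((\<lambda>x. integral S (f x)) has_real_derivative integral S (fx x0)) (at x0)"
  unfolding has_field_derivative_iff LIM_eq
proof (intro allI impI)
  fix e' :: real assume "e' > 0"
  define e where "e = e' / (measure lebesgue S + 1)"
  have mpos: "measure lebesgue S \<ge> 0" by simp
  have mp1: "measure lebesgue S + 1 > 0" using mpos by linarith
  have e: "e > 0" unfolding e_def using \<open>e' > 0\<close> mp1 by simp
  have "e * measure lebesgue S < e'"
    using \<open>e' > 0\<close> mpos mp1 by (simp add: e_def field_simps)
  obtain X0 where X0: "x0 \<in> X0" "open X0"
    "\<forall>x\<in>X0 \<inter> X. \<forall>t\<in>K. dist ((\<lambda>(x, t). fx x t) (x, t)) ((\<lambda>(x, t). fx x t) (x0, t)) \<le> e"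
    using continuous_on_prod_compactE[OF cont K(1) X(2) e] by blast
  have "open (X0 \<inter> X)" "x0 \<in> X0 \<inter> X" using X X0 by auto
  then obtain \<delta> where \<delta>: "\<delta> > 0" "ball x0 \<delta> \<subseteq> X0 \<inter> X" using open_contains_ball by blast
  show "\<exists>s>0. \<forall>y. y \<noteq> x0 \<and> norm (y - x0) < s \<longrightarrow>
      norm ((integral S (f y) - integral S (f x0)) / (y - x0) - integral S (fx x0)) < e'"
  proof (intro exI[of _ \<delta>] conjI allI impI)
    show "\<delta> > 0" by fact
    fix y assume y: "y \<noteq> x0 \<and> norm (y - x0) < \<delta>"
    have seg: "closed_segment x0 y \<subseteq> ball x0 \<delta>"
      using y \<delta> by (intro closed_segment_subset convex_ball) (auto simp: dist_norm abs_minus_commute)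
    have pt: "\<bar>f y t - f x0 t - (y - x0) * fx x0 t\<bar> \<le> e * \<bar>y - x0\<bar>" if t: "t \<in> S" for t
    proof -
      have "\<bar>(\<lambda>s. f s t - s * fx x0 t) y - (\<lambda>s. f s t - s * fx x0 t) x0\<bar> \<le> e * \<bar>y - x0\<bar>"
      proof (rule mvt_lin_bound[where \<phi>' = "\<lambda>s. fx s t - fx x0 t"])
        fix s assume s: "s \<in> closed_segment x0 y"
        then have sX: "s \<in> X0 \<inter> X" using seg \<delta> by blast
        show "((\<lambda>s. f s t - s * fx x0 t) has_real_derivative fx s t - fx x0 t) (at s)"
          using fx[of s t] sX t K by (auto intro!: derivative_eq_intros)
        show "\<bar>fx s t - fx x0 t\<bar> \<le> e" using X0(3) sX t K by (auto simp: dist_real_def)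
      qed
      then show ?thesis by (simp add: algebra_simps)
    qed
    have x0X: "x0 \<in> X" by fact
    have yX: "y \<in> X" using seg \<delta> by auto
    have i1: "(\<lambda>t. f y t - f x0 t) integrable_on S" using intf[OF yX] intf[OF x0X] by (rule integrable_diff)
    have i2: "(\<lambda>t. (y - x0) * fx x0 t) integrable_on S" using intfx by (rule integrable_on_mult_right)
    have i3: "(\<lambda>t. f y t - f x0 t - (y - x0) * fx x0 t) integrable_on S" using i1 i2 by (rule integrable_diff)
    have "integral S (\<lambda>t. f y t - f x0 t - (y - x0) * fx x0 t)
        = integral S (\<lambda>t. f y t - f x0 t) - integral S (\<lambda>t. (y - x0) * fx x0 t)"
      using i1 i2 by (rule integral_diff)
    also have "\<dots> = integral S (f y) - integral S (f x0) - (y - x0) * integral S (fx x0)"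
      using intf[OF yX] intf[OF x0X] by (simp add: integral_diff)
    finally have "integral S (f y) - integral S (f x0) - (y - x0) * integral S (fx x0)
        = integral S (\<lambda>t. f y t - f x0 t - (y - x0) * fx x0 t)" by simp
    also have "\<bar>\<dots>\<bar> \<le> integral S (\<lambda>t. e * \<bar>y - x0\<bar>)"
      using integral_norm_bound_integral[OF i3 integrable_on_const[OF K(3)], of "e * \<bar>y - x0\<bar>"] pt
      unfolding real_norm_def by blast
    also have "\<dots> = e * \<bar>y - x0\<bar> * measure lebesgue S" by (rule integral_const_lm[OF K(3)])
    finally have A: "\<bar>integral S (f y) - integral S (f x0) - (y - x0) * integral S (fx x0)\<bar>
        \<le> e * measure lebesgue S * \<bar>y - x0\<bar>" by (simp add: algebra_simps)
    have ne: "\<bar>y - x0\<bar> > 0" using y by simp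
    have "(integral S (f y) - integral S (f x0)) / (y - x0) - integral S (fx x0)
        = (integral S (f y) - integral S (f x0) - (y - x0) * integral S (fx x0)) / (y - x0)"
      using y by (simp add: field_simps)
    then have "norm ((integral S (f y) - integral S (f x0)) / (y - x0) - integral S (fx x0))
        = \<bar>integral S (f y) - integral S (f x0) - (y - x0) * integral S (fx x0)\<bar> / \<bar>y - x0\<bar>"
      by (simp add: abs_divide)
    also have "\<dots> \<le> e * measure lebesgue S" using A ne by (simp add: divide_le_eq)
    also have "\<dots> < e'" by fact
    finally show "norm ((integral S (f y) - integral S (f x0)) / (y - x0) - integral S (fx x0)) < e'" .
  qed
qed




lemma outer_mv: "(\<chi> i j. p$i * q$j) *v (h::real^'n) = (q \<bullet> h) *\<^sub>R p"
  by (simp add: vec_eq_iff matrix_vector_mult_def inner_vec_def sum_distrib_left sum_distrib_right algebra_simps)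

lemma qvec_comp [simp]: "qvec p $ 1 = - (p $ 2)" "qvec p $ 2 = p $ 1"
  by (simp_all add: qvec_def)

lemma linear_qvec: "linear qvec"
  by (rule linearI) (simp_all add: qvec_def vec_eq_iff)

lemma bounded_linear_qvec: "bounded_linear qvec"
  using linear_qvec linear_conv_bounded_linear by blast

definition qmat :: "real^2^2 \<Rightarrow> real^2^2" where
  "qmat M = (\<chi> i. if i = 1 then - (M $ 2) else M $ 1)"

lemma qmat_mv: "qmat M *v h = qvec (M *v h)"
  unfolding vec_eq_iff
  by (auto simp: forall_2 qmat_def matrix_vector_mul_component qvec_def)

lemma bounded_linear_qmat: "bounded_linear qmat"
proof -
  have "linear qmat" by (rule linearI) (simp_all add: qmat_def vec_eq_iff)
  then show ?thesis using linear_conv_bounded_linear by blast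
qed

lemma Dmat_psd:
  assumes "a > 0" "m > 0" "b > a"
  shows "(Dmat a b m q *v w) \<bullet> w \<ge> 0"
proof -
  have "(Dmat a b m q *v w) \<bullet> w = (a * norm q + m) * (w \<bullet> w)
      + (if q = 0 then 0 else ((b - a) / norm q) * (q \<bullet> w)^2)"
    by (simp add: Dmat_def matrix_vector_mult_add_rdistrib outer_mv algebra_simps
        scaleR_matrix_vector_assoc[symmetric] power2_eq_square)
  also have "\<dots> \<ge> 0" using assms by (auto intro!: add_nonneg_nonneg mult_nonneg_nonneg)
  finally show ?thesis .
qed




lemma C1_cont: "C1_field U F J \<Longrightarrow> continuous_on U F"
  unfolding C1_field_def
  by (meson continuous_at_imp_continuous_on has_derivative_continuous)

lemma div_zero:
  assumes reg: "divergence_domain \<Omega> \<nu> \<sigma>" and U: "open U" "closure \<Omega> \<subseteq> U"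
    and C1: "C1_field U F J" and bc: "\<And>x. x \<in> frontier \<Omega> \<Longrightarrow> F x \<bullet> \<nu> x = 0"
  shows "integral \<Omega> (\<lambda>x. trace (J x)) = 0"
proof -
  have sp: "space \<sigma> = frontier \<Omega>" using reg by (simp add: divergence_domain_def)
  have "integral \<Omega> (\<lambda>x. trace (J x)) = (\<integral>x. F x \<bullet> \<nu> x \<partial>\<sigma>)"
    using reg U C1 unfolding divergence_domain_def by blast
  also have "\<dots> = (\<integral>x. 0 \<partial>\<sigma>)"
    by (rule Bochner_Integration.integral_cong) (auto simp: sp bc)
  finally show ?thesis by simp
qed

lemma slice:
  fixes \<Omega> U :: "(real^2) set" and \<nu> :: "real^2 \<Rightarrow> real^2" and \<sigma> :: "(real^2) measure"
    and u v ut :: "real^2 \<Rightarrow> real" and gu gv W :: "real^2 \<Rightarrow> real^2" and Hu Hv JW :: "real^2 \<Rightarrow> real^2^2"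
  assumes dom: "open \<Omega>" "bounded \<Omega>"
    and reg: "divergence_domain \<Omega> \<nu> \<sigma>"
    and U: "open U" "closure \<Omega> \<subseteq> U"
    and du: "\<forall>x\<in>U. (u has_derivative (\<lambda>h. gu x \<bullet> h)) (at x)" and Cu: "C1_field U gu Hu"
    and dv: "\<forall>x\<in>U. (v has_derivative (\<lambda>h. gv x \<bullet> h)) (at x)" and Cv: "C1_field U gv Hv"
    and CW: "C1_field U W JW"
    and eq: "\<And>x. x \<in> \<Omega> \<Longrightarrow> ut x - trace (JW x) = - (gu x \<bullet> qvec (gv x))"
    and bcu: "\<And>x. x \<in> frontier \<Omega> \<Longrightarrow> W x \<bullet> \<nu> x = 0"
    and bcv: "\<And>x. x \<in> frontier \<Omega> \<Longrightarrow> v x = 0"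
    and cut: "continuous_on (closure \<Omega>) ut"
  shows "integral \<Omega> (\<lambda>x. 2 * u x * ut x) = - 2 * integral \<Omega> (\<lambda>x. W x \<bullet> gu x)"
proof -
  have cu: "continuous_on U u"
    using du by (meson continuous_at_imp_continuous_on has_derivative_continuous)
  have cv: "continuous_on U v"
    using dv by (meson continuous_at_imp_continuous_on has_derivative_continuous)
  have cgu: "continuous_on U gu" using Cu by (rule C1_cont)
  have cgv: "continuous_on U gv" using Cv by (rule C1_cont)
  have cW: "continuous_on U W" using CW by (rule C1_cont)
  have cHu: "continuous_on U Hu" and dgu: "\<forall>x\<in>U. (gu has_derivative (\<lambda>h. Hu x *v h)) (at x)"
    using Cu by (auto simp: C1_field_def)
  have cJW: "continuous_on U JW" and dW: "\<forall>x\<in>U. (W has_derivative (\<lambda>h. JW x *v h)) (at x)"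
    using CW by (auto simp: C1_field_def)
  have clU: "closure \<Omega> \<subseteq> U" by fact
  have OU: "\<Omega> \<subseteq> U" using U closure_subset by blast
  note [continuous_intros] = continuous_on_subset[OF cu clU] continuous_on_subset[OF cv clU]
    continuous_on_subset[OF cgu clU] continuous_on_subset[OF cgv clU] continuous_on_subset[OF cW clU]
    continuous_on_subset[OF cJW clU] cut
  have intc: "f integrable_on \<Omega>" if "continuous_on (closure \<Omega>) f" for f :: "real^2 \<Rightarrow> real"
    using int_closure[OF dom(2) dom(1) that] .
  have ctrJW: "continuous_on (closure \<Omega>) (\<lambda>x. trace (JW x))"
    unfolding trace_def sum_2 by (intro continuous_intros)
  define J1 where "J1 x = u x *\<^sub>R JW x + (\<chi> i j. W x $ i * gu x $ j)" for x
  have C1: "C1_field U (\<lambda>x. u x *\<^sub>R W x) J1"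
    unfolding C1_field_def
  proof (intro conjI ballI)
    fix x assume x: "x \<in> U"
    have "((\<lambda>x. u x *\<^sub>R W x) has_derivative (\<lambda>h. u x *\<^sub>R (JW x *v h) + (gu x \<bullet> h) *\<^sub>R W x)) (at x)"
      using du dW x by (auto intro!: derivative_eq_intros)
    moreover have "(\<lambda>h. u x *\<^sub>R (JW x *v h) + (gu x \<bullet> h) *\<^sub>R W x) = (\<lambda>h. J1 x *v h)"
      by (simp add: J1_def matrix_vector_mult_add_rdistrib outer_mv scaleR_matrix_vector_assoc)
    ultimately show "((\<lambda>x. u x *\<^sub>R W x) has_derivative (\<lambda>h. J1 x *v h)) (at x)" by simp
  next
    show "continuous_on U J1" unfolding J1_def
      by (intro continuous_intros cu cJW cW cgu)
  qed
  have i1: "integral \<Omega> (\<lambda>x. trace (J1 x)) = 0"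
    by (rule div_zero[OF reg U C1]) (simp add: bcu)
  have tr1: "trace (J1 x) = u x * trace (JW x) + W x \<bullet> gu x" for x
    by (simp add: J1_def trace_def sum_2 inner_vec_def algebra_simps)
  have A: "integral \<Omega> (\<lambda>x. u x * trace (JW x)) = - integral \<Omega> (\<lambda>x. W x \<bullet> gu x)"
  proof -
    have "integral \<Omega> (\<lambda>x. u x * trace (JW x) + W x \<bullet> gu x)
        = integral \<Omega> (\<lambda>x. u x * trace (JW x)) + integral \<Omega> (\<lambda>x. W x \<bullet> gu x)"
      by (intro integral_add intc continuous_intros ctrJW)
    then show ?thesis using i1 tr1 by simp
  qed
  define M where "M x = (\<chi> i j. gu x $ i * gu x $ j) + u x *\<^sub>R Hu x" for x
  define J2 where "J2 x = (\<chi> i j. qvec (u x *\<^sub>R gu x) $ i * gv x $ j) + v x *\<^sub>R qmat (M x)" for x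
  have C2: "C1_field U (\<lambda>x. v x *\<^sub>R qvec (u x *\<^sub>R gu x)) J2"
    unfolding C1_field_def
  proof (intro conjI ballI)
    fix x assume x: "x \<in> U"
    have d1: "((\<lambda>x. u x *\<^sub>R gu x) has_derivative (\<lambda>h. u x *\<^sub>R (Hu x *v h) + (gu x \<bullet> h) *\<^sub>R gu x)) (at x)"
      using du dgu x by (auto intro!: derivative_eq_intros)
    have d2: "((\<lambda>x. qvec (u x *\<^sub>R gu x)) has_derivative (\<lambda>h. qvec (u x *\<^sub>R (Hu x *v h) + (gu x \<bullet> h) *\<^sub>R gu x))) (at x)"
      using bounded_linear.has_derivative[OF bounded_linear_qvec d1] .
    have "((\<lambda>x. v x *\<^sub>R qvec (u x *\<^sub>R gu x)) has_derivative
        (\<lambda>h. v x *\<^sub>R qvec (u x *\<^sub>R (Hu x *v h) + (gu x \<bullet> h) *\<^sub>R gu x) + (gv x \<bullet> h) *\<^sub>R qvec (u x *\<^sub>R gu x))) (at x)"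
      using dv d2 x by (auto intro!: derivative_eq_intros)
    moreover have "(\<lambda>h. v x *\<^sub>R qvec (u x *\<^sub>R (Hu x *v h) + (gu x \<bullet> h) *\<^sub>R gu x) + (gv x \<bullet> h) *\<^sub>R qvec (u x *\<^sub>R gu x))
        = (\<lambda>h. J2 x *v h)"
      by (simp add: J2_def M_def matrix_vector_mult_add_rdistrib outer_mv scaleR_matrix_vector_assoc[symmetric]
          qmat_mv) (simp add: algebra_simps)
    ultimately show "((\<lambda>x. v x *\<^sub>R qvec (u x *\<^sub>R gu x)) has_derivative (\<lambda>h. J2 x *v h)) (at x)" by simp
  next
    show "continuous_on U J2" unfolding J2_def M_def
      by (intro continuous_intros cu cv cHu cgv cgu bounded_linear.continuous_on[OF bounded_linear_qmat]
          bounded_linear.continuous_on[OF bounded_linear_qvec])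
  qed
  have i2: "integral \<Omega> (\<lambda>x. trace (J2 x)) = 0"
    by (rule div_zero[OF reg U C2]) (simp add: bcv)
  have tr2: "trace (J2 x) = - (u x * (gu x \<bullet> qvec (gv x)))" if x: "x \<in> U" for x
  proof -
    have sym: "Hu x $ 1 $ 2 = Hu x $ 2 $ 1"
      by (rule schwarz[OF U(1) x du dgu cHu])
    show ?thesis
      by (simp add: J2_def M_def trace_def sum_2 inner_vec_def qmat_def algebra_simps sym)
  qed
  have B: "integral \<Omega> (\<lambda>x. u x * (gu x \<bullet> qvec (gv x))) = 0"
  proof -
    have "integral \<Omega> (\<lambda>x. trace (J2 x)) = integral \<Omega> (\<lambda>x. - (u x * (gu x \<bullet> qvec (gv x))))"
      by (rule integral_cong) (use tr2 OU in auto)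
    then show ?thesis using i2 by simp
  qed
  have cq: "continuous_on (closure \<Omega>) (\<lambda>x. u x * (gu x \<bullet> qvec (gv x)))"
    by (intro continuous_intros bounded_linear.continuous_on[OF bounded_linear_qvec])
  have "integral \<Omega> (\<lambda>x. 2 * u x * ut x)
      = integral \<Omega> (\<lambda>x. 2 * (u x * trace (JW x)) - 2 * (u x * (gu x \<bullet> qvec (gv x))))"
  proof (rule integral_cong)
    fix x assume "x \<in> \<Omega>"
    then have "ut x = trace (JW x) - gu x \<bullet> qvec (gv x)" using eq by (simp add: algebra_simps)
    then show "2 * u x * ut x = 2 * (u x * trace (JW x)) - 2 * (u x * (gu x \<bullet> qvec (gv x)))"
      by (simp add: right_diff_distrib)
  qed
  also have "\<dots> = 2 * integral \<Omega> (\<lambda>x. u x * trace (JW x)) - 2 * integral \<Omega> (\<lambda>x. u x * (gu x \<bullet> qvec (gv x)))"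
    by (subst integral_diff) (auto intro!: intc continuous_intros ctrJW cq integrable_on_mult_right)
  also have "\<dots> = - 2 * integral \<Omega> (\<lambda>x. W x \<bullet> gu x)" using A B by simp
  finally show ?thesis .
qed




lemma cont_param:
  fixes f :: "real \<Rightarrow> 'b::euclidean_space \<Rightarrow> real"
  assumes K: "compact K" "S \<subseteq> K" "S \<in> lmeasurable"
    and cont: "continuous_on (X \<times> K) (\<lambda>(x, t). f x t)"
    and intf: "\<And>x. x \<in> X \<Longrightarrow> f x integrable_on S"
  shows "continuous_on X (\<lambda>x. integral S (f x))"
  unfolding continuous_on_iff
proof (intro ballI allI impI)
  fix x0 e' assume x0: "x0 \<in> X" and "(e'::real) > 0"
  define e where "e = e' / (measure lebesgue S + 1)"
  have mpos: "measure lebesgue S \<ge> 0" by simp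
  have mp1: "measure lebesgue S + 1 > 0" using mpos by linarith
  have e: "e > 0" unfolding e_def using \<open>e' > 0\<close> mp1 by simp
  have lt: "e * measure lebesgue S < e'"
    using \<open>e' > 0\<close> mpos mp1 by (simp add: e_def field_simps)
  obtain X0 where X0: "x0 \<in> X0" "open X0"
    "\<forall>x\<in>X0 \<inter> X. \<forall>t\<in>K. dist ((\<lambda>(x, t). f x t) (x, t)) ((\<lambda>(x, t). f x t) (x0, t)) \<le> e"
    using continuous_on_prod_compactE[OF cont K(1) x0 e] by blast
  obtain \<delta> where \<delta>: "\<delta> > 0" "ball x0 \<delta> \<subseteq> X0" using X0 open_contains_ball by blast
  show "\<exists>d>0. \<forall>x'\<in>X. dist x' x0 < d \<longrightarrow> dist (integral S (f x')) (integral S (f x0)) < e'"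
  proof (intro exI[of _ \<delta>] conjI ballI impI)
    show "\<delta> > 0" by fact
    fix y assume y: "y \<in> X" "dist y x0 < \<delta>"
    then have yX0: "y \<in> X0 \<inter> X" using \<delta> by (auto simp: dist_commute)
    have i3: "(\<lambda>t. f y t - f x0 t) integrable_on S" using intf[OF y(1)] intf[OF x0] by (rule integrable_diff)
    have "integral S (f y) - integral S (f x0) = integral S (\<lambda>t. f y t - f x0 t)"
      using intf[OF y(1)] intf[OF x0] by (simp add: integral_diff)
    also have "\<bar>\<dots>\<bar> \<le> integral S (\<lambda>t. e)"
      using integral_norm_bound_integral[OF i3 integrable_on_const[OF K(3)], of e] X0(3) yX0 K(2)
      unfolding real_norm_def dist_real_def by auto
    also have "\<dots> = e * measure lebesgue S" by (rule integral_const_lm[OF K(3)])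
    finally show "dist (integral S (f y)) (integral S (f x0)) < e'"
      using lt by (simp add: dist_real_def)
  qed
qed

lemma meas_ind:
  fixes F :: "'a::euclidean_space \<Rightarrow> real"
  assumes "open \<Omega>" "continuous_on \<Omega> F"
  shows "(\<lambda>x. indicator \<Omega> x * F x) \<in> borel_measurable lborel"
  using borel_measurable_continuous_on_indicator[of \<Omega> F] assms by (simp add: borel_open)

lemma meas_ind_enn:
  fixes F :: "'a::euclidean_space \<Rightarrow> real"
  assumes "open \<Omega>" "continuous_on \<Omega> F"
  shows "(\<lambda>x. ennreal (F x) * indicator \<Omega> x) \<in> borel_measurable lborel"
proof -
  have "(\<lambda>x. ennreal (indicator \<Omega> x * F x)) \<in> borel_measurable lborel"
    using meas_ind[OF assms] by measurable
  moreover have "(\<lambda>x. ennreal (indicator \<Omega> x * F x)) = (\<lambda>x. ennreal (F x) * indicator \<Omega> x)"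
    by (auto simp: indicator_def fun_eq_iff)
  ultimately show ?thesis by simp
qed



theorem lemma3p1:
  fixes \<Omega> U :: "(real^2) set" and T a b m :: real
    and \<nu> :: "real^2 \<Rightarrow> real^2" and \<sigma> :: "(real^2) measure"
    and u v ut :: "real^2 \<Rightarrow> real \<Rightarrow> real" and u0 :: "real^2 \<Rightarrow> real"
    and gu gv :: "real^2 \<Rightarrow> real \<Rightarrow> real^2"
    and Hu Hv JW :: "real^2 \<Rightarrow> real \<Rightarrow> real^2^2"
  assumes dom: "open \<Omega>" "connected \<Omega>" "bounded \<Omega>"
    and reg_dom: "divergence_domain \<Omega> \<nu> \<sigma>"
    and params: "T > 0" "a > 0" "b > 0" "m > 0" "b > a"
    and U: "open U" "closure \<Omega> \<subseteq> U"
    \<comment> \<open>regularity of the solution (classical solution, C^2 in space, C^1 in time)\<close>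
    and reg_v: "\<And>t. t \<in> {0<..<T} \<Longrightarrow>
                   (\<forall>x\<in>U. ((\<lambda>y. v y t) has_derivative (\<lambda>h. gv x t \<bullet> h)) (at x))
                   \<and> C1_field U (\<lambda>x. gv x t) (\<lambda>x. Hv x t)"
    and reg_u: "\<And>t. t \<in> {0<..<T} \<Longrightarrow>
                   (\<forall>x\<in>U. ((\<lambda>y. u y t) has_derivative (\<lambda>h. gu x t \<bullet> h)) (at x))
                   \<and> C1_field U (\<lambda>x. gu x t) (\<lambda>x. Hu x t)"
    and reg_flux: "\<And>t. t \<in> {0<..<T} \<Longrightarrow>
                   C1_field U (\<lambda>x. Dmat a b m (qvec (gv x t)) *v gu x t) (\<lambda>x. JW x t)"
    and reg_ut: "\<And>x t. x \<in> U \<Longrightarrow> t \<in> {0<..<T} \<Longrightarrow>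
                   ((\<lambda>s. u x s) has_real_derivative ut x t) (at t)"
    and cont: "continuous_on (U \<times> {0<..<T}) (\<lambda>(x, t). ut x t)"
              "continuous_on (U \<times> {0<..<T}) (\<lambda>(x, t). gu x t)"
              "continuous_on (U \<times> {0<..<T}) (\<lambda>(x, t). Hu x t)"
              "continuous_on (U \<times> {0<..<T}) (\<lambda>(x, t). v x t)"
              "continuous_on (U \<times> {0<..<T}) (\<lambda>(x, t). gv x t)"
              "continuous_on (U \<times> {0<..<T}) (\<lambda>(x, t). Hv x t)"
              "continuous_on (U \<times> {0<..<T}) (\<lambda>(x, t). JW x t)"
              "continuous_on (closure \<Omega> \<times> {0<..T}) (\<lambda>(x, t). u x t)"
    \<comment> \<open>the equations in \<Omega>_T\<close>
    and eq_v: "\<And>x t. x \<in> \<Omega> \<Longrightarrow> t \<in> {0<..<T} \<Longrightarrow> trace (Hv x t) = gu x t $ 1"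
    and eq_u: "\<And>x t. x \<in> \<Omega> \<Longrightarrow> t \<in> {0<..<T} \<Longrightarrow>
                 ut x t - trace (JW x t) = - (gu x t \<bullet> qvec (gv x t))"
    \<comment> \<open>boundary conditions on \<partial>\<Omega> \<times> (0,T)\<close>
    and bc_u: "\<And>x t. x \<in> frontier \<Omega> \<Longrightarrow> t \<in> {0<..<T} \<Longrightarrow>
                 (Dmat a b m (qvec (gv x t)) *v gu x t) \<bullet> \<nu> x = 0"
    and bc_v: "\<And>x t. x \<in> frontier \<Omega> \<Longrightarrow> t \<in> {0<..<T} \<Longrightarrow> v x t = 0"
    \<comment> \<open>initial condition, attained in the L^2 sense\<close>
    and init: "\<And>x. x \<in> \<Omega> \<Longrightarrow> u x 0 = u0 x"
    and init_L2: "((\<lambda>t. \<integral>\<^sup>+x\<in>\<Omega>. ennreal ((u x t - u0 x)^2) \<partial>lborel) \<longlongrightarrow> 0) (at_right 0)"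
    and u0_L2: "u0 \<in> borel_measurable lborel" "(\<integral>\<^sup>+x\<in>\<Omega>. ennreal ((u0 x)^2) \<partial>lborel) < \<infinity>"
  shows "ennreal (1/2) * (SUP t\<in>{0..T}. \<integral>\<^sup>+x\<in>\<Omega>. ennreal ((u x t)^2) \<partial>lborel)
         + (\<integral>\<^sup>+t\<in>{0<..<T}. (\<integral>\<^sup>+x\<in>\<Omega>.
               ennreal ((Dmat a b m (qvec (gv x t)) *v gu x t) \<bullet> gu x t) \<partial>lborel) \<partial>lborel)
         \<le> (\<integral>\<^sup>+x\<in>\<Omega>. ennreal ((u0 x)^2) \<partial>lborel)"
proof -
  define W where "W x t = Dmat a b m (qvec (gv x t)) *v gu x t" for x t
  define e where "e t = integral \<Omega> (\<lambda>x. (u x t)^2)" for t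
  define g where "g t = integral \<Omega> (\<lambda>x. W x t \<bullet> gu x t)" for t
  define E0 where "E0 = (\<integral>\<^sup>+x\<in>\<Omega>. ennreal ((u0 x)^2) \<partial>lborel)"
  have clU: "closure \<Omega> \<subseteq> U" by (rule U(2))
  have OU: "\<Omega> \<subseteq> U" using clU closure_subset by blast
  have lm: "\<Omega> \<in> lmeasurable" using dom by (simp add: lmeasurable_open)
  have Ob[measurable]: "\<Omega> \<in> sets borel" using dom by (simp add: borel_open)
  have cpt: "compact (closure \<Omega>)" using dom by (simp add: compact_closure)
  have "E0 \<noteq> \<infinity>" using u0_L2(2) by (simp add: E0_def)
  then obtain e0 where e0: "E0 = ennreal e0" "e0 \<ge> 0" by (cases E0) auto
  have cu: "continuous_on (closure \<Omega>) (\<lambda>x. u x t)" if t: "t \<in> {0<..T}" for t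
  proof -
    have "continuous_on (closure \<Omega>) (\<lambda>x. (\<lambda>(x, t). u x t) (x, t))"
      by (rule continuous_on_compose2[OF cont(8)]) (use t in \<open>auto intro!: continuous_intros\<close>)
    then show ?thesis by simp
  qed
  have cut: "continuous_on (closure \<Omega>) (\<lambda>x. ut x t)" if t: "t \<in> {0<..<T}" for t
  proof -
    have "continuous_on (closure \<Omega>) (\<lambda>x. (\<lambda>(x, t). ut x t) (x, t))"
      by (rule continuous_on_compose2[OF cont(1)]) (use t clU in \<open>auto intro!: continuous_intros\<close>)
    then show ?thesis by simp
  qed
  have intc: "f integrable_on \<Omega>" if "continuous_on (closure \<Omega>) f" for f :: "real^2 \<Rightarrow> real"
    using int_closure[OF dom(3) dom(1) that] .
  have Eeq: "(\<integral>\<^sup>+x\<in>\<Omega>. ennreal ((u x t)^2) \<partial>lborel) = ennreal (e t)" if t: "t \<in> {0<..T}" for t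
    unfolding e_def
    by (rule nn_integral_has_integral_lebesgue') (auto intro!: integrable_integral intc continuous_intros cu t)
  have e_nn: "e t \<ge> 0" for t
    unfolding e_def
    by (cases "(\<lambda>x. (u x t)^2) integrable_on \<Omega>") (auto intro: integral_nonneg simp: not_integrable_integral)
  have Qnn: "W x t \<bullet> gu x t \<ge> 0" for x t
    unfolding W_def using Dmat_psd params by auto
  have cW: "continuous_on U (\<lambda>x. W x t)" if t: "t \<in> {0<..<T}" for t
    using reg_flux[OF t] unfolding W_def by (rule C1_cont)
  have cgu: "continuous_on U (\<lambda>x. gu x t)" if t: "t \<in> {0<..<T}" for t
    using reg_u[OF t] by (auto intro: C1_cont)
  have intQ: "(\<lambda>x. W x t \<bullet> gu x t) integrable_on \<Omega>" if t: "t \<in> {0<..<T}" for t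
    by (rule intc) (intro continuous_intros continuous_on_subset[OF cW[OF t] clU] continuous_on_subset[OF cgu[OF t] clU])
  have Geq: "(\<integral>\<^sup>+x\<in>\<Omega>. ennreal (W x t \<bullet> gu x t) \<partial>lborel) = ennreal (g t)" if t: "t \<in> {0<..<T}" for t
    unfolding g_def
    by (rule nn_integral_has_integral_lebesgue') (auto intro!: integrable_integral intQ t Qnn)
  have g_nn: "g t \<ge> 0" for t
    unfolding g_def
    by (cases "(\<lambda>x. W x t \<bullet> gu x t) integrable_on \<Omega>") (auto intro: integral_nonneg Qnn simp: not_integrable_integral)
  have slice_t: "integral \<Omega> (\<lambda>x. 2 * u x t * ut x t) = - 2 * g t" if t: "t \<in> {0<..<T}" for t
    unfolding g_def
  proof (rule slice[where U=U and \<nu>=\<nu> and \<sigma>=\<sigma> and Hu="\<lambda>x. Hu x t" and gv="\<lambda>x. gv x t"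
        and Hv="\<lambda>x. Hv x t" and JW="\<lambda>x. JW x t" and v="\<lambda>x. v x t"])
    show "open \<Omega>" "bounded \<Omega>" using dom by auto
    show "divergence_domain \<Omega> \<nu> \<sigma>" by fact
    show "open U" "closure \<Omega> \<subseteq> U" using U by auto
    show "\<forall>x\<in>U. ((\<lambda>x. u x t) has_derivative (\<bullet>) (gu x t)) (at x)" using reg_u[OF t] by auto
    show "C1_field U (\<lambda>x. gu x t) (\<lambda>x. Hu x t)" using reg_u[OF t] by auto
    show "\<forall>x\<in>U. ((\<lambda>x. v x t) has_derivative (\<bullet>) (gv x t)) (at x)" using reg_v[OF t] by auto
    show "C1_field U (\<lambda>x. gv x t) (\<lambda>x. Hv x t)" using reg_v[OF t] by auto
    show "C1_field U (\<lambda>x. W x t) (\<lambda>x. JW x t)" using reg_flux[OF t] by (simp add: W_def)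
    show "\<And>x. x \<in> \<Omega> \<Longrightarrow> ut x t - trace (JW x t) = - (gu x t \<bullet> qvec (gv x t))" using eq_u t by auto
    show "\<And>x. x \<in> frontier \<Omega> \<Longrightarrow> W x t \<bullet> \<nu> x = 0" using bc_u t by (simp add: W_def)
    show "\<And>x. x \<in> frontier \<Omega> \<Longrightarrow> v x t = 0" using bc_v t by auto
    show "continuous_on (closure \<Omega>) (\<lambda>x. ut x t)" using cut[OF t] .
  qed
  have cfx: "continuous_on ({0<..<T} \<times> closure \<Omega>) (\<lambda>(\<tau>, x). 2 * u x \<tau> * ut x \<tau>)"
  proof -
    have sw: "continuous_on ({0<..<T} \<times> closure \<Omega>) (\<lambda>p. (snd p, fst p))"
      by (intro continuous_intros)
    have c1: "continuous_on ({0<..<T} \<times> closure \<Omega>) (\<lambda>p. (\<lambda>(x, t). ut x t) (snd p, fst p))"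
      by (rule continuous_on_compose2[OF cont(1) sw]) (use clU in auto)
    have c2: "continuous_on ({0<..<T} \<times> closure \<Omega>) (\<lambda>p. (\<lambda>(x, t). u x t) (snd p, fst p))"
      by (rule continuous_on_compose2[OF cont(8) sw]) auto
    have "continuous_on ({0<..<T} \<times> closure \<Omega>) (\<lambda>p. 2 * (\<lambda>(x, t). u x t) (snd p, fst p) * (\<lambda>(x, t). ut x t) (snd p, fst p))"
      by (intro continuous_intros c1 c2)
    then show ?thesis by (simp add: case_prod_beta)
  qed
  have deriv: "(e has_real_derivative (- 2 * g t)) (at t)" if t: "t \<in> {0<..<T}" for t
  proof -
    have "((\<lambda>\<tau>. integral \<Omega> (\<lambda>x. (u x \<tau>)^2)) has_real_derivative integral \<Omega> (\<lambda>x. 2 * u x t * ut x t)) (at t)"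
    proof (rule leibniz_set[where K="closure \<Omega>" and X="{0<..<T}"])
      show "compact (closure \<Omega>)" by fact
      show "\<Omega> \<subseteq> closure \<Omega>" by (rule closure_subset)
      show "\<Omega> \<in> lmeasurable" by fact
      show "open {0<..<T}" by simp
      show "t \<in> {0<..<T}" by fact
      show "((\<lambda>\<tau>. (u x \<tau>)^2) has_real_derivative 2 * u x \<tau> * ut x \<tau>) (at \<tau>)"
        if "\<tau> \<in> {0<..<T}" "x \<in> closure \<Omega>" for \<tau> x
        using reg_ut[of x \<tau>] that clU by (auto intro!: derivative_eq_intros)
      show "continuous_on ({0<..<T} \<times> closure \<Omega>) (\<lambda>(\<tau>, x). 2 * u x \<tau> * ut x \<tau>)" by (rule cfx)
      show "(\<lambda>x. (u x \<tau>)^2) integrable_on \<Omega>" if "\<tau> \<in> {0<..<T}" for \<tau>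
        using that by (auto intro!: intc continuous_intros cu)
      show "(\<lambda>x. 2 * u x t * ut x t) integrable_on \<Omega>"
        using t by (auto intro!: intc continuous_intros cu cut)
    qed
    then show ?thesis using slice_t[OF t] by (simp add: e_def[abs_def])
  qed
  have gcont: "continuous_on {0<..<T} g"
  proof -
    have "continuous_on {0<..<T} (\<lambda>\<tau>. integral \<Omega> (\<lambda>x. 2 * u x \<tau> * ut x \<tau>))"
    proof (rule cont_param[where K="closure \<Omega>"])
      show "compact (closure \<Omega>)" by fact
      show "\<Omega> \<subseteq> closure \<Omega>" by (rule closure_subset)
      show "\<Omega> \<in> lmeasurable" by fact
      show "continuous_on ({0<..<T} \<times> closure \<Omega>) (\<lambda>(\<tau>, x). 2 * u x \<tau> * ut x \<tau>)" by (rule cfx)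
      show "(\<lambda>x. 2 * u x \<tau> * ut x \<tau>) integrable_on \<Omega>" if "\<tau> \<in> {0<..<T}" for \<tau>
        using that by (auto intro!: intc continuous_intros cu cut)
    qed
    then have "continuous_on {0<..<T} (\<lambda>\<tau>. - (1/2) * integral \<Omega> (\<lambda>x. 2 * u x \<tau> * ut x \<tau>))"
      by (intro continuous_intros)
    moreover have "\<And>\<tau>. \<tau> \<in> {0<..<T} \<Longrightarrow> - (1/2) * integral \<Omega> (\<lambda>x. 2 * u x \<tau> * ut x \<tau>) = g \<tau>"
      using slice_t by simp
    ultimately show ?thesis by (rule continuous_on_eq)
  qed
  have anti: "e t \<le> e s" if st: "0 < s" "s \<le> t" "t < T" for s t
  proof (rule DERIV_nonpos_imp_nonincreasing[OF st(2)])
    fix x assume "s \<le> x" "x \<le> t"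
    then have "x \<in> {0<..<T}" using st by auto
    then show "\<exists>y. (e has_real_derivative y) (at x) \<and> y \<le> 0"
      using deriv g_nn by (intro exI[of _ "- 2 * g x"]) auto
  qed
  have le0: "e s \<le> e0" if s: "s \<in> {0<..<T}" for s
  proof -
    have key: "e s \<le> (1 + \<epsilon>) * e0" if \<epsilon>: "\<epsilon> > 0" for \<epsilon>
    proof -
      define c1 where "c1 = 1 + 1/\<epsilon>"
      define c2 where "c2 = 1 + \<epsilon>"
      have c12: "c1 \<ge> 0" "c2 \<ge> 0" using \<epsilon> by (auto simp: c1_def c2_def)
      define D where "D t = (\<integral>\<^sup>+x\<in>\<Omega>. ennreal ((u x t - u0 x)^2) \<partial>lborel)" for t
      have sq: "(p::real)^2 \<le> c1 * (p - q)^2 + c2 * q^2" for p q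
      proof -
        have "0 \<le> ((p - q) - \<epsilon> * q)^2 / \<epsilon>" using \<epsilon> by simp
        also have "((p - q) - \<epsilon> * q)^2 / \<epsilon> = (p - q)^2 / \<epsilon> - 2 * (p - q) * q + \<epsilon> * q^2"
          using \<epsilon> by (simp add: field_simps power2_eq_square)
        finally have "2 * (p - q) * q \<le> (p - q)^2 / \<epsilon> + \<epsilon> * q^2" by simp
        moreover have "p^2 = (p - q)^2 + 2 * (p - q) * q + q^2" by (simp add: power2_eq_square algebra_simps)
        ultimately show ?thesis by (simp add: c1_def c2_def algebra_simps)
      qed
      have bnd: "ennreal (e s) \<le> ennreal c1 * D s' + ennreal c2 * E0" if s': "s' \<in> {0<..<s}" for s'
      proof -
        have s'T: "s' \<in> {0<..T}" using s' s by auto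
        have "ennreal (e s) \<le> ennreal (e s')" using anti[of s' s] s' s by (auto intro: ennreal_leI)
        also have "\<dots> = (\<integral>\<^sup>+x\<in>\<Omega>. ennreal ((u x s')^2) \<partial>lborel)" using Eeq[OF s'T] by simp
        also have "\<dots> \<le> (\<integral>\<^sup>+x. ennreal c1 * (ennreal ((u x s' - u0 x)^2) * indicator \<Omega> x)
                        + ennreal c2 * (ennreal ((u0 x)^2) * indicator \<Omega> x) \<partial>lborel)"
        proof (rule nn_integral_mono)
          fix x
          have "ennreal ((u x s')^2) \<le> ennreal (c1 * (u x s' - u0 x)^2 + c2 * (u0 x)^2)"
            using sq by (rule ennreal_leI)
          also have "\<dots> = ennreal c1 * ennreal ((u x s' - u0 x)^2) + ennreal c2 * ennreal ((u0 x)^2)"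
            using c12 by (simp add: ennreal_plus ennreal_mult)
          finally show "ennreal ((u x s')^2) * indicator \<Omega> x \<le> ennreal c1 * (ennreal ((u x s' - u0 x)^2) * indicator \<Omega> x)
                        + ennreal c2 * (ennreal ((u0 x)^2) * indicator \<Omega> x)"
            by (auto simp: indicator_def)
        qed
        also have "\<dots> = ennreal c1 * D s' + ennreal c2 * E0"
        proof -
          have mu: "(\<lambda>x. indicator \<Omega> x * u x s') \<in> borel_measurable lborel"
            by (rule meas_ind[OF dom(1)]) (rule continuous_on_subset[OF cu[OF s'T] closure_subset])
          have "(\<lambda>x. ennreal ((indicator \<Omega> x * u x s' - u0 x)^2) * indicator \<Omega> x) \<in> borel_measurable lborel"
            using mu u0_L2(1) by measurable
          moreover have "(\<lambda>x. ennreal ((indicator \<Omega> x * u x s' - u0 x)^2) * indicator \<Omega> x)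
              = (\<lambda>x. ennreal ((u x s' - u0 x)^2) * indicator \<Omega> x)"
            by (auto simp: indicator_def fun_eq_iff)
          ultimately have m1: "(\<lambda>x. ennreal ((u x s' - u0 x)^2) * indicator \<Omega> x) \<in> borel_measurable lborel"
            by simp
          have m2: "(\<lambda>x. ennreal ((u0 x)^2) * indicator \<Omega> x) \<in> borel_measurable lborel"
            using u0_L2(1) by measurable
          show ?thesis
            using m1 m2 by (simp add: nn_integral_add nn_integral_cmult D_def E0_def)
        qed
        finally show ?thesis .
      qed
      have lim: "((\<lambda>s'. ennreal c1 * D s' + ennreal c2 * E0) \<longlongrightarrow> ennreal c1 * 0 + ennreal c2 * E0) (at_right 0)"
        by (intro tendsto_add tendsto_mult_ennreal tendsto_const) (use init_L2 in \<open>auto simp: D_def\<close>)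
      have "ennreal (e s) \<le> ennreal c1 * 0 + ennreal c2 * E0"
      proof (rule tendsto_lowerbound[OF lim])
        show "\<forall>\<^sub>F s' in at_right 0. ennreal (e s) \<le> ennreal c1 * D s' + ennreal c2 * E0"
          using s by (intro eventually_at_rightI[of 0 s]) (auto intro: bnd)
      qed simp
      also have "\<dots> = ennreal (c2 * e0)" using e0 c12 by (simp add: ennreal_mult)
      finally have "e s \<le> c2 * e0" using c12 e0 by (simp add: ennreal_le_iff mult_nonneg_nonneg)
      then show ?thesis by (simp add: c2_def)
    qed
    have lim: "((\<lambda>\<epsilon>. (1 + \<epsilon>) * e0) \<longlongrightarrow> (1 + 0) * e0) (at_right 0)"
      by (intro tendsto_intros)
    have "e s \<le> (1 + 0) * e0"
      by (rule tendsto_lowerbound[OF lim]) (auto intro!: eventually_at_rightI[of 0 1] key)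
    then show ?thesis by simp
  qed
  have leT: "e T \<le> e0"
  proof -
    define tn where "tn n = T - (T/2) * inverse (real (Suc n))" for n
    have tn_in: "tn n \<in> {0<..<T}" for n
    proof -
      have i1: "inverse (real (Suc n)) \<le> 1" "inverse (real (Suc n)) > 0" by (auto simp: inverse_le_1_iff)
      have "(T/2) * inverse (real (Suc n)) \<le> T/2" using i1 params(1) by (simp add: mult_left_le)
      moreover have "(T/2) * inverse (real (Suc n)) > 0" using i1 params(1) by simp
      ultimately show ?thesis using params(1) by (simp add: tn_def)
    qed
    have tn_lim: "tn \<longlonglongrightarrow> T"
    proof -
      have "(\<lambda>n. T - (T/2) * inverse (real (Suc n))) \<longlonglongrightarrow> T - (T/2) * 0"
        by (intro tendsto_intros LIMSEQ_inverse_real_of_nat)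
      then show ?thesis by (simp add: tn_def[abs_def])
    qed
    define f where "f n x = ennreal ((u x (tn n))^2) * indicator \<Omega> x" for n x
    have fm: "f n \<in> borel_measurable lborel" for n
    proof -
      have "tn n \<in> {0<..T}" using tn_in[of n] by auto
      then have "continuous_on \<Omega> (\<lambda>x. (u x (tn n))^2)"
        by (intro continuous_intros continuous_on_subset[OF cu closure_subset])
      then show ?thesis unfolding f_def[abs_def] by (rule meas_ind_enn[OF dom(1)])
    qed
    have flim: "(\<lambda>n. f n x) \<longlonglongrightarrow> ennreal ((u x T)^2) * indicator \<Omega> x" for x
    proof (cases "x \<in> \<Omega>")
      case True
      have cT: "continuous_on {0<..T} (\<lambda>t. u x t)"
      proof -
        have "continuous_on {0<..T} (\<lambda>t. (\<lambda>(x, t). u x t) (x, t))"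
          by (rule continuous_on_compose2[OF cont(8)]) (use True closure_subset in \<open>auto intro!: continuous_intros\<close>)
        then show ?thesis by simp
      qed
      have "(\<lambda>n. u x (tn n)) \<longlonglongrightarrow> u x T"
      proof (rule continuous_on_tendsto_compose[OF cT tn_lim])
        show "T \<in> {0<..T}" using params(1) by simp
        have "\<forall>n. tn n \<in> {0<..T}" using tn_in by (auto simp: less_imp_le)
        then show "\<forall>\<^sub>F n in sequentially. tn n \<in> {0<..T}" by (rule always_eventually)
      qed
      then have "(\<lambda>n. ennreal ((u x (tn n))^2)) \<longlonglongrightarrow> ennreal ((u x T)^2)"
        by (intro tendsto_intros)
      then show ?thesis using True by (simp add: f_def)
    next
      case False
      then show ?thesis by (simp add: f_def)
    qed
    have "ennreal (e T) = (\<integral>\<^sup>+x. ennreal ((u x T)^2) * indicator \<Omega> x \<partial>lborel)"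
      using Eeq[of T] params(1) by simp
    also have "\<dots> = (\<integral>\<^sup>+x. liminf (\<lambda>n. f n x) \<partial>lborel)"
      by (intro nn_integral_cong) (simp add: lim_imp_Liminf[OF trivial_limit_sequentially flim])
    also have "\<dots> \<le> liminf (\<lambda>n. integral\<^sup>N lborel (f n))"
      by (rule nn_integral_liminf[OF fm])
    also have "\<dots> \<le> ennreal e0"
    proof (rule Liminf_le)
      show "\<forall>\<^sub>F n in sequentially. integral\<^sup>N lborel (f n) \<le> ennreal e0"
      proof (intro always_eventually allI)
        fix n
        have "integral\<^sup>N lborel (f n) = ennreal (e (tn n))"
          using Eeq[of "tn n"] tn_in[of n] by (simp add: f_def[abs_def])
        also have "\<dots> \<le> ennreal e0" using le0[OF tn_in[of n]] by (rule ennreal_leI)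
        finally show "integral\<^sup>N lborel (f n) \<le> ennreal e0" .
      qed
    qed simp
    finally show ?thesis using e0 by (simp add: ennreal_le_iff)
  qed
  have ftc: "(g has_integral (e s - e t)/2) {s..t}" if st: "0 < s" "s \<le> t" "t < T" for s t
  proof -
    have "(g has_integral ((\<lambda>\<tau>. - e \<tau> / 2) t - (\<lambda>\<tau>. - e \<tau> / 2) s)) {s..t}"
    proof (rule fundamental_theorem_of_calculus[OF st(2)])
      fix x assume "x \<in> {s..t}"
      then have x: "x \<in> {0<..<T}" using st by auto
      have "((\<lambda>\<tau>. - e \<tau> / 2) has_real_derivative (- (- 2 * g x) / 2)) (at x)"
        using deriv[OF x] by (auto intro!: derivative_eq_intros)
      then have "((\<lambda>\<tau>. - e \<tau> / 2) has_real_derivative g x) (at x within {s..t})"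
        by (simp add: has_field_derivative_at_within)
      then show "((\<lambda>\<tau>. - e \<tau> / 2) has_vector_derivative g x) (at x within {s..t})"
        by (simp add: has_real_derivative_iff_has_vector_derivative)
    qed
    then show ?thesis by (simp add: field_simps)
  qed
  have I: "(\<integral>\<^sup>+\<tau>\<in>{0<..<T}. (\<integral>\<^sup>+x\<in>\<Omega>. ennreal (W x \<tau> \<bullet> gu x \<tau>) \<partial>lborel) \<partial>lborel) \<le> ennreal (e0/2)"
  proof -
    define sn where "sn n = T / (real n + 3)" for n :: nat
    define A where "A n = {sn n .. T - sn n}" for n
    have sn_pos: "sn n > 0" for n using params(1) by (simp add: sn_def)
    have sn_le: "2 * sn n < T" for n
    proof -
      have "2 * sn n = T * (2 / (real n + 3))" by (simp add: sn_def)
      also have "\<dots> < T * 1" using params(1) by (intro mult_strict_left_mono) (auto simp: divide_less_eq)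
      finally show ?thesis by simp
    qed
    have sn_mono: "sn m \<le> sn n" if "n \<le> m" for n m
      unfolding sn_def using params(1) that by (intro divide_left_mono) auto
    have A_sub: "A n \<subseteq> {0<..<T}" for n
      using sn_pos[of n] sn_le[of n] by (auto simp: A_def)
    have A_mono: "A n \<subseteq> A m" if "n \<le> m" for n m
      using sn_mono[OF that] by (auto simp: A_def)
    define f where "f n \<tau> = ennreal (indicator (A n) \<tau> * g \<tau>)" for n \<tau>
    have fm: "f n \<in> borel_measurable lborel" for n
    proof -
      have "(\<lambda>\<tau>. indicator (A n) \<tau> *\<^sub>R g \<tau>) \<in> borel_measurable borel"
        by (rule borel_measurable_continuous_on_indicator)
           (auto simp: A_def intro: continuous_on_subset[OF gcont A_sub[unfolded A_def]])
      then show ?thesis unfolding f_def[abs_def] by simp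
    qed
    have finc: "incseq f"
    proof (rule incseq_SucI, rule le_funI)
      fix n \<tau>
      show "f n \<tau> \<le> f (Suc n) \<tau>"
        using A_mono[of n "Suc n"] g_nn[of \<tau>] by (auto simp: f_def indicator_def)
    qed
    have fint: "integral\<^sup>N lborel (f n) \<le> ennreal (e0/2)" for n
    proof -
      have "integral\<^sup>N lborel (f n) = ennreal ((e (sn n) - e (T - sn n)) / 2)"
        unfolding f_def[abs_def] A_def
        by (rule nn_integral_has_integral_lebesgue)
           (use g_nn ftc[of "sn n" "T - sn n"] sn_pos[of n] sn_le[of n] in auto)
      also have "\<dots> \<le> ennreal (e0/2)"
        using le0[of "sn n"] e_nn[of "T - sn n"] sn_pos[of n] sn_le[of n]
        by (intro ennreal_leI) auto
      finally show ?thesis .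
    qed
    have pw: "(\<integral>\<^sup>+x\<in>\<Omega>. ennreal (W x \<tau> \<bullet> gu x \<tau>) \<partial>lborel) * indicator {0<..<T} \<tau> \<le> (SUP n. f n \<tau>)" for \<tau>
    proof (cases "\<tau> \<in> {0<..<T}")
      case True
      obtain N :: nat where N: "T / min \<tau> (T - \<tau>) < real N"
        using reals_Archimedean2 by blast
      have mpos: "min \<tau> (T - \<tau>) > 0" using True by auto
      have "sn N \<le> min \<tau> (T - \<tau>)"
      proof -
        have "T < real N * min \<tau> (T - \<tau>)" using N mpos by (simp add: divide_less_eq)
        also have "\<dots> \<le> (real N + 3) * min \<tau> (T - \<tau>)" using mpos by (intro mult_right_mono) auto
        finally have "T \<le> min \<tau> (T - \<tau>) * (real N + 3)" by (simp add: mult.commute)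
        moreover have "(real N + 3) > 0" by simp
        ultimately show ?thesis unfolding sn_def by (simp only: pos_divide_le_eq)
      qed
      then have "\<tau> \<in> A N" by (auto simp: A_def)
      then have "f N \<tau> = ennreal (g \<tau>)" by (simp add: f_def)
      moreover have "f N \<tau> \<le> (SUP n. f n \<tau>)" by (rule SUP_upper) simp
      ultimately show ?thesis using Geq[OF True] True by simp
    next
      case False
      then show ?thesis by simp
    qed
    have "(\<integral>\<^sup>+\<tau>\<in>{0<..<T}. (\<integral>\<^sup>+x\<in>\<Omega>. ennreal (W x \<tau> \<bullet> gu x \<tau>) \<partial>lborel) \<partial>lborel)
        \<le> (\<integral>\<^sup>+\<tau>. (SUP n. f n \<tau>) \<partial>lborel)"
      by (rule nn_integral_mono) (rule pw)
    also have "\<dots> = (SUP n. integral\<^sup>N lborel (f n))"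
      by (rule nn_integral_monotone_convergence_SUP[OF finc fm])
    also have "\<dots> \<le> ennreal (e0/2)"
      by (rule SUP_least) (rule fint)
    finally show ?thesis .
  qed
  have S: "(SUP t\<in>{0..T}. \<integral>\<^sup>+x\<in>\<Omega>. ennreal ((u x t)^2) \<partial>lborel) \<le> ennreal e0"
  proof (rule SUP_least)
    fix t assume t: "t \<in> {0..T}"
    show "(\<integral>\<^sup>+x\<in>\<Omega>. ennreal ((u x t)^2) \<partial>lborel) \<le> ennreal e0"
    proof (cases "t = 0")
      case True
      have "(\<integral>\<^sup>+x\<in>\<Omega>. ennreal ((u x t)^2) \<partial>lborel) = E0"
        unfolding E0_def True
        by (rule nn_integral_cong) (auto simp: indicator_def init)
      then show ?thesis using e0 by simp
    next
      case False
      then have tT: "t \<in> {0<..T}" using t by auto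
      have "e t \<le> e0"
      proof (cases "t = T")
        case True then show ?thesis using leT by simp
      next
        case False then show ?thesis using le0 tT by auto
      qed
      then show ?thesis using Eeq[OF tT] by (simp add: ennreal_leI)
    qed
  qed
  have "ennreal (1/2) * (SUP t\<in>{0..T}. \<integral>\<^sup>+x\<in>\<Omega>. ennreal ((u x t)^2) \<partial>lborel)
         + (\<integral>\<^sup>+\<tau>\<in>{0<..<T}. (\<integral>\<^sup>+x\<in>\<Omega>. ennreal (W x \<tau> \<bullet> gu x \<tau>) \<partial>lborel) \<partial>lborel)
       \<le> ennreal (1/2) * ennreal e0 + ennreal (e0/2)"
    by (intro add_mono mult_left_mono S I) auto
  also have "ennreal (1/2) * ennreal e0 = ennreal (e0/2)"
    using e0 by (subst ennreal_mult[symmetric]) auto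
  also have "ennreal (e0/2) + ennreal (e0/2) = ennreal (e0/2 + e0/2)"
    using e0 by (subst ennreal_plus) auto
  also have "e0/2 + e0/2 = e0" by simp
  finally show ?thesis using e0 unfolding W_def E0_def by simp
qed

end
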